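(* Let $K$ be an algebraically closed field of characteristic $p>0$, $p\neq 2$, and $n\geq 4$. Let $\Phi$ be a group automorphism of $\mathrm{Aut}_0 K[x_1,\ldots,x_n]$ which fixes every point of the standard torus (the automorphisms $x_i\mapsto\lambda_ix_i$, $\lambda_i\in K^\times$). Fix a multi-index $(i_2,\ldots,i_n)$ of nonnegative integers with $i_2+\cdots+i_n\geq 2$. For $\beta\in K^\times$ let $M=\beta x_2^{i_2}\cdots x_n^{i_n}$ and let $\varphi$ be the automorphism $x_1\mapsto x_1+M$, $x_k\mapsto x_k$ for $k=2,\ldots,n$. Then $\Phi(\varphi)$ is the automorphism $x_1\mapsto x_1+aM$, $x_k\mapsto x_k$ ($k\geq 2$), where $a\in K^\times$ is a constant depending only on the multi-index $(i_2,\ldots,i_n)$ (in particular independent of $\beta$).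
   Context: $\mathrm{Aut}_0 K[x_1,\ldots,x_n]$ is the group under composition of $K$-algebra automorphisms of $K[x_1,\ldots,x_n]$ preserving the origin, i.e. each $\varphi(x_i)$ has zero constant term. *)

theory Defs
  imports "HOL-Library.Poly_Mapping" "HOL-Computational_Algebra.Polynomial" "HOL-Algebra.Group"
begin

text \<open>Multivariate polynomials over K: finitely supported maps from monomials
 (exponent vectors nat =>0 nat) to coefficients. Variable x_i is indexed by i (we use i = 1..n).\<close>
type_synonym 'a mpoly = "(nat \<Rightarrow>\<^sub>0 nat) \<Rightarrow>\<^sub>0 'a"

definition Var :: "nat \<Rightarrow> 'a::comm_ring_1 mpoly" where
  "Var i = Poly_Mapping.single (Poly_Mapping.single i 1) 1"

definition in_vars :: "nat \<Rightarrow> 'a::zero mpoly \<Rightarrow> bool" where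
  "in_vars n p \<longleftrightarrow> (\<forall>m \<in> Poly_Mapping.keys p. Poly_Mapping.keys (m :: nat \<Rightarrow>\<^sub>0 nat) \<subseteq> {1..n})"

text \<open>A K-algebra endomorphism of K[x_1..x_n] is determined by the images of x_1..x_n;
 we represent it by sigma :: nat => mpoly with sigma i = Var i for i outside {1..n} (normalisation).\<close>

definition subst :: "(nat \<Rightarrow> 'a::comm_ring_1 mpoly) \<Rightarrow> 'a mpoly \<Rightarrow> 'a mpoly" where
  "subst \<sigma> p = (\<Sum>m\<in>Poly_Mapping.keys p. Poly_Mapping.single 0 (Poly_Mapping.lookup p m) * (\<Prod>i\<in>Poly_Mapping.keys m. \<sigma> i ^ Poly_Mapping.lookup m i))"

definition comp_end :: "(nat \<Rightarrow> 'a::comm_ring_1 mpoly) \<Rightarrow> (nat \<Rightarrow> 'a mpoly) \<Rightarrow> (nat \<Rightarrow> 'a mpoly)" where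
  "comp_end \<phi> \<psi> = (\<lambda>i. subst \<phi> (\<psi> i))"

definition End0 :: "nat \<Rightarrow> (nat \<Rightarrow> 'a::comm_ring_1 mpoly) set" where
  "End0 n = {\<sigma>. (\<forall>i\<in>{1..n}. in_vars n (\<sigma> i) \<and> Poly_Mapping.lookup (\<sigma> i) 0 = 0)
               \<and> (\<forall>i. i \<notin> {1..n} \<longrightarrow> \<sigma> i = Var i)}"

definition Aut0_set :: "nat \<Rightarrow> (nat \<Rightarrow> 'a::comm_ring_1 mpoly) set" where
  "Aut0_set n = {\<sigma> \<in> End0 n. \<exists>\<tau> \<in> End0 n. comp_end \<sigma> \<tau> = Var \<and> comp_end \<tau> \<sigma> = Var}"

definition Aut0 :: "nat \<Rightarrow> (nat \<Rightarrow> 'a::comm_ring_1 mpoly) monoid" where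
  "Aut0 n = \<lparr>carrier = Aut0_set n, mult = comp_end, one = Var\<rparr>"

definition torus :: "nat \<Rightarrow> (nat \<Rightarrow> 'a::comm_ring_1 mpoly) set" where
  "torus n = {\<sigma>. \<exists>c::nat \<Rightarrow> 'a. (\<forall>i\<in>{1..n}. c i \<noteq> 0) \<and>
      \<sigma> = (\<lambda>i. if i \<in> {1..n} then Poly_Mapping.single 0 (c i) * Var i else Var i)}"

definition elem_aut :: "(nat \<Rightarrow>\<^sub>0 nat) \<Rightarrow> 'a::comm_ring_1 \<Rightarrow> (nat \<Rightarrow> 'a mpoly)" where
  "elem_aut idx \<beta> = (\<lambda>i. if i = 1 then Var 1 + Poly_Mapping.single idx \<beta> else Var i)"

definition alg_closed :: "'a::field itself \<Rightarrow> bool" where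
  "alg_closed _ \<longleftrightarrow> (\<forall>q :: 'a poly. degree q > 0 \<longrightarrow> (\<exists>x. poly q x = 0))"

end

theory Submission
  imports Defs
begin


abbreviation sng :: "'k \<Rightarrow> 'v::zero \<Rightarrow> 'k \<Rightarrow>\<^sub>0 'v" where "sng \<equiv> Poly_Mapping.single"
abbreviation lk :: "('k \<Rightarrow>\<^sub>0 'v::zero) \<Rightarrow> 'k \<Rightarrow> 'v" where "lk \<equiv> Poly_Mapping.lookup"
abbreviation ks :: "('k \<Rightarrow>\<^sub>0 'v::zero) \<Rightarrow> 'k set" where "ks \<equiv> Poly_Mapping.keys"

definition monm :: "(nat \<Rightarrow> 'a::comm_ring_1 mpoly) \<Rightarrow> (nat \<Rightarrow>\<^sub>0 nat) \<Rightarrow> 'a mpoly" where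
  "monm \<sigma> m = (\<Prod>i\<in>ks m. \<sigma> i ^ lk m i)"

lemma lookup_scal: "lk (sng 0 c * p) m = c * lk p m"
  by (simp add: mult_map_scale_conv_mult[symmetric] map.rep_eq when_def)

lemma subst_superset:
  assumes "finite S" "ks p \<subseteq> S"
  shows "subst \<sigma> p = (\<Sum>m\<in>S. sng 0 (lk p m) * monm \<sigma> m)"
  unfolding subst_def monm_def
  by (rule sum.mono_neutral_left[OF assms]) (auto simp: in_keys_iff)

lemma subst_add: "subst \<sigma> (p + q) = subst \<sigma> p + subst \<sigma> q"
proof -
  let ?S = "ks p \<union> ks q \<union> ks (p+q)"
  have f: "finite ?S" by simp
  show ?thesis
    apply (subst subst_superset[OF f, of "p+q"], blast)
    apply (subst subst_superset[OF f, of p], blast)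
    apply (subst subst_superset[OF f, of q], blast)
    by (simp add: lookup_add single_add distrib_right sum.distrib)
qed

lemma subst_zero[simp]: "subst \<sigma> 0 = 0"
  by (simp add: subst_def)

lemma subst_single: "subst \<sigma> (sng m c) = sng 0 c * monm \<sigma> m"
  by (cases "c = 0") (simp_all add: subst_def monm_def)

lemma mon_e: "monm \<sigma> (sng i (1::nat)) = \<sigma> i"
proof -
  have k: "ks (sng i (1::nat)) = {i}" by simp
  show ?thesis unfolding monm_def k by simp
qed

lemma mon_e'[simp]: "monm \<sigma> (sng i (Suc 0)) = \<sigma> i"
  using mon_e[of \<sigma> i] by simp

lemma elem1[simp]: "elem_aut idx \<beta> (Suc 0) = Var 1 + sng idx \<beta>"
  by (simp add: elem_aut_def)

lemma elemi[simp]: "i \<noteq> Suc 0 \<Longrightarrow> elem_aut idx \<beta> i = Var i"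
  by (simp add: elem_aut_def)

lemma subst_Var: "subst \<sigma> (Var i) = \<sigma> i"
  by (simp add: Var_def subst_single mon_e[simplified])

lemma single_e_pow: "(sng (sng j (1::nat)) d :: 'a::comm_ring_1 mpoly) ^ e = sng (sng j e) (d ^ e)"
proof (induction e)
  case 0 then show ?case by simp
next
  case (Suc e)
  have "sng j (1::nat) + sng j e = sng j (Suc e)" by (simp add: single_add[symmetric])
  with Suc show ?case by (simp add: mult_single)
qed

lemma sum_singles: "(\<Sum>j\<in>ks m. sng j (lk m j)) = (m :: nat \<Rightarrow>\<^sub>0 nat)"
  by (rule poly_mapping_eqI) (auto simp: lookup_sum lookup_single when_def in_keys_iff)

lemma prod_diag_gen:
  assumes "finite S" "\<And>j. j \<in> S \<Longrightarrow> \<sigma> j = sng (sng j 1) (d j)"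
  shows "(\<Prod>j\<in>S. \<sigma> j ^ lk m j) = (sng (\<Sum>j\<in>S. sng j (lk m j)) (\<Prod>j\<in>S. d j ^ lk m j) :: 'a::comm_ring_1 mpoly)"
  using assms
proof (induction S rule: finite_induct)
  case empty then show ?case by simp
next
  case (insert x F)
  then show ?case by (simp add: single_e_pow[simplified] mult_single)
qed

lemma mon_diag:
  assumes "\<And>j. j \<in> ks m \<Longrightarrow> \<sigma> j = sng (sng j 1) (d j)"
  shows "monm \<sigma> m = sng m (\<Prod>j\<in>ks m. d j ^ lk m j)"
  unfolding monm_def by (subst prod_diag_gen[OF _ assms]) (simp_all add: sum_singles)

lemma prod_F1_gen:
  assumes "finite S" "\<And>j. j \<in> S \<Longrightarrow> \<exists>F G. \<sigma> j = sng F G \<and> lk F 1 = (0::nat)"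
  shows "\<exists>F G. (\<Prod>j\<in>S. \<sigma> j ^ lk m j) = (sng F G :: 'a::comm_ring_1 mpoly) \<and> lk F 1 = 0"
  using assms
proof (induction S rule: finite_induct)
  case empty then show ?case by (intro exI[of _ 0] exI[of _ 1]) simp
next
  case (insert x F)
  from insert obtain F1 G1 where 1: "(\<Prod>j\<in>F. \<sigma> j ^ lk m j) = sng F1 G1" "lk F1 1 = 0" by blast
  from insert obtain F2 G2 where 2: "\<sigma> x = sng F2 G2" "lk F2 1 = 0" by blast
  have "\<exists>F G. (sng F2 G2 :: 'a mpoly) ^ e = sng F G \<and> lk F 1 = 0" for e
  proof (induction e)
    case 0 then show ?case by (intro exI[of _ 0] exI[of _ 1]) simp
  next
    case (Suc e)
    then obtain F G where "(sng F2 G2 :: 'a mpoly) ^ e = sng F G" "lk F 1 = 0" by blast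
    then show ?case using 2 by (intro exI[of _ "F2 + F"] exI[of _ "G2 * G"]) (simp add: mult_single lookup_add)
  qed
  then obtain F3 G3 where 3: "(sng F2 G2 :: 'a mpoly) ^ lk m x = sng F3 G3" "lk F3 1 = 0" by blast
  show ?case using insert 1 2 3
    by (intro exI[of _ "F3 + F1"] exI[of _ "G3 * G1"]) (simp add: mult_single lookup_add)
qed

lemma mon_F1:
  assumes "\<And>j. j \<in> ks m \<Longrightarrow> \<exists>F G. \<sigma> j = sng F G \<and> lk F 1 = (0::nat)"
  shows "lk (monm \<sigma> m) (sng 1 1) = 0"
proof -
  obtain F G where "monm \<sigma> m = sng F G" "lk F 1 = 0"
    using prod_F1_gen[of "ks m" \<sigma> m] assms unfolding monm_def by auto
  then show ?thesis by (auto simp: lookup_single when_def)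
qed

lemma subst_F1:
  assumes "\<And>j. \<exists>F G. \<sigma> j = sng F G \<and> lk F 1 = (0::nat)"
  shows "lk (subst \<sigma> p) (sng 1 1) = 0"
  unfolding subst_def by (simp add: lookup_sum lookup_scal mon_F1[OF assms, simplified] monm_def[symmetric])

lemma subst_diag_lookup:
  assumes "\<And>j. \<sigma> j = sng (sng j 1) (d j)"
  shows "lk (subst \<sigma> p) m = lk p m * (\<Prod>j\<in>ks m. d j ^ lk m j)"
proof -
  have "subst \<sigma> p = (\<Sum>m\<in>ks p. sng m (lk p m * (\<Prod>j\<in>ks m. d j ^ lk m j)))"
    unfolding subst_def monm_def[symmetric] by (simp add: mon_diag assms mult_single)
  then show ?thesis by (auto simp: lookup_sum lookup_single when_def in_keys_iff)
qed




lemma single_eq0[simp]: "sng k v = 0 \<longleftrightarrow> v = 0"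
  by (metis lookup_single_eq single_zero)

definition diag :: "nat \<Rightarrow> (nat \<Rightarrow> 'a) \<Rightarrow> nat \<Rightarrow> 'a::comm_ring_1 mpoly" where
  "diag n c = (\<lambda>i. if i \<in> {1..n} then sng 0 (c i) * Var i else Var i)"

definition dg :: "nat \<Rightarrow> (nat \<Rightarrow> 'a) \<Rightarrow> nat \<Rightarrow> 'a::comm_ring_1" where
  "dg n c i = (if i \<in> {1..n} then c i else 1)"

lemma diag_eq: "diag n c i = sng (sng i 1) (dg n c i)"
  by (simp add: diag_def dg_def Var_def mult_single)

lemma C1: "comp_end X (diag n c) i = sng 0 (dg n c i) * X i"
  by (simp add: comp_end_def diag_eq subst_single mon_e)

lemma C2: "lk (comp_end (diag n c) Y i) m = lk (Y i) m * (\<Prod>j\<in>ks m. dg n c j ^ lk m j)"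
  unfolding comp_end_def by (rule subst_diag_lookup) (rule diag_eq)

lemma C3:
  assumes "dg n c 1 * \<gamma> = \<beta> * (\<Prod>j\<in>ks idx. dg n c j ^ lk idx j)"
  shows "comp_end (diag n c) (elem_aut idx \<beta>) = comp_end (elem_aut idx \<gamma>) (diag n c)"
proof
  fix i
  show "comp_end (diag n c) (elem_aut idx \<beta>) i = comp_end (elem_aut idx \<gamma>) (diag n c) i"
  proof (cases "i = 1")
    case True
    have m: "monm (diag n c) idx = sng idx (\<Prod>j\<in>ks idx. dg n c j ^ lk idx j)"
      by (rule mon_diag) (rule diag_eq)
    have "comp_end (diag n c) (elem_aut idx \<beta>) i = sng (sng 1 1) (dg n c 1) + sng idx (\<beta> * (\<Prod>j\<in>ks idx. dg n c j ^ lk idx j))"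
      using True by (simp add: comp_end_def subst_add subst_Var diag_eq subst_single m mult_single)
    also have "\<dots> = sng 0 (dg n c 1) * (Var 1 + sng idx \<gamma>)"
      using assms by (simp add: Var_def distrib_left mult_single)
    finally show ?thesis using True by (simp add: C1)
  next
    case False
    have "comp_end (diag n c) (elem_aut idx \<beta>) i = sng (sng i 1) (dg n c i)"
      using False by (simp add: comp_end_def subst_Var diag_eq)
    moreover have "comp_end (elem_aut idx \<gamma>) (diag n c) i = sng (sng i 1) (dg n c i)"
      using False by (simp add: C1 Var_def mult_single)
    ultimately show ?thesis by simp
  qed
qed

lemma C4:
  assumes "1 \<notin> ks idx"
  shows "comp_end (elem_aut idx \<beta>) (elem_aut idx \<gamma>) = (elem_aut idx (\<beta> + \<gamma>) :: nat \<Rightarrow> 'a::comm_ring_1 mpoly)"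
proof
  fix i
  have m: "monm (elem_aut idx \<beta>) idx = (sng idx (\<Prod>j\<in>ks idx. (\<lambda>_. 1::'a) j ^ lk idx j))"
  proof (rule mon_diag)
    fix j assume "j \<in> ks idx"
    then have "j \<noteq> Suc 0" using assms by auto
    then show "elem_aut idx \<beta> j = sng (sng j 1) 1" by (simp add: Var_def)
  qed
  show "comp_end (elem_aut idx \<beta>) (elem_aut idx \<gamma>) i = elem_aut idx (\<beta> + \<gamma>) i"
    by (cases "i = 1") (simp_all add: comp_end_def subst_add subst_Var subst_single m mult_single single_add add.assoc)
qed

lemma elem_zero: "elem_aut idx 0 = Var"
  by (auto simp: elem_aut_def)

lemma keys_Var: "ks (Var i :: 'a::comm_ring_1 mpoly) = {sng i 1}"
  by (simp add: Var_def)

lemma lk_Var0: "lk (Var i :: 'a::comm_ring_1 mpoly) 0 = 0"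
  by (simp add: Var_def lookup_single when_def)

lemma elem_in:
  assumes "n \<ge> 1" "ks idx \<subseteq> {2..n}" "idx \<noteq> 0"
  shows "elem_aut idx \<beta> \<in> carrier (Aut0 n)"
proof -
  have iv1: "in_vars n (Var 1 + sng idx b)" for b :: 'a
    unfolding in_vars_def
  proof
    fix m assume "m \<in> ks (Var 1 + sng idx b)"
    then have "m \<in> ks (Var 1 :: 'a mpoly) \<union> ks (sng idx b)"
      by (rule subsetD[OF keys_add])
    then have "m = sng 1 1 \<or> m = idx" by (simp add: keys_Var) (metis empty_iff singletonD)
    then show "ks m \<subseteq> {1..n}" using assms by auto
  qed
  have lk1: "lk (Var 1 + sng idx b) 0 = 0" for b :: 'a
    using assms by (simp add: lookup_add lk_Var0 lookup_single when_def)
  have ivi: "in_vars n (Var i :: 'a mpoly)" if "i \<in> {1..n}" for i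
    using that by (simp add: in_vars_def keys_Var)
  have E: "elem_aut idx b \<in> End0 n" for b :: 'a
    unfolding End0_def
  proof (intro CollectI conjI ballI allI impI)
    fix i assume i: "i \<in> {1..n}"
    show "in_vars n (elem_aut idx b i)"
      using i iv1 ivi by (cases "i = 1") simp_all
    show "lk (elem_aut idx b i) 0 = 0"
      using lk1 lk_Var0 by (cases "i = 1") simp_all
  next
    fix i assume "i \<notin> {1..n}"
    then have "i \<noteq> Suc 0" using assms by auto
    then show "elem_aut idx b i = Var i" by simp
  qed
  have "1 \<notin> ks idx" using assms by auto
  then have inv: "comp_end (elem_aut idx \<beta>) (elem_aut idx (-\<beta>)) = Var" "comp_end (elem_aut idx (-\<beta>)) (elem_aut idx \<beta>) = Var"
    using C4[of idx \<beta> "-\<beta>"] C4[of idx "-\<beta>" \<beta>] by (simp_all add: elem_zero)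
  have "elem_aut idx \<beta> \<in> Aut0_set n"
    unfolding Aut0_set_def using E inv by blast
  then show ?thesis by (simp add: Aut0_def)
qed

lemma diag_End0:
  assumes "\<forall>i\<in>{1..n}. c i \<noteq> 0"
  shows "diag n c \<in> End0 n"
  using assms
  by (auto simp: End0_def diag_eq dg_def in_vars_def lookup_single when_def Var_def)

lemma diag_in:
  assumes "\<forall>i\<in>{1..n}. c i \<noteq> (0::'a::field)"
  shows "diag n c \<in> carrier (Aut0 n)"
proof -
  let ?c' = "\<lambda>i. inverse (c i)"
  have "\<forall>i\<in>{1..n}. ?c' i \<noteq> 0" using assms by simp
  have inv: "comp_end (diag n a) (diag n b) = Var" if "\<forall>i\<in>{1..n}. a i * b i = 1" for a b :: "nat \<Rightarrow> 'a"
  proof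
    fix i show "comp_end (diag n a) (diag n b) i = Var i"
      using that by (simp add: C1 diag_eq mult_single Var_def dg_def mult.commute)
  qed
  show ?thesis
    using diag_End0[OF assms] diag_End0[of n ?c'] assms inv[of c ?c'] inv[of ?c' c]
    unfolding Aut0_def Aut0_set_def by simp (rule bexI[of _ "diag n ?c'"], simp_all)
qed

lemma diag_torus:
  assumes "\<forall>i\<in>{1..n}. c i \<noteq> 0"
  shows "diag n c \<in> torus n"
  unfolding torus_def diag_def by (rule CollectI, rule exI[of _ c]) (use assms in simp)

lemma Var_torus: "Var \<in> torus n"
  unfolding torus_def by (rule CollectI, rule exI[of _ "\<lambda>_. 1"]) auto



lemma alg_closed_infinite:
  assumes "alg_closed TYPE('a::field)"
  shows "infinite (UNIV :: 'a set)"
proof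
  assume fin: "finite (UNIV::'a set)"
  define P where "P = (\<Prod>x\<in>(UNIV::'a set). [:-x, 1:])"
  have d: "degree P = card (UNIV::'a set)"
    unfolding P_def by (subst degree_prod_eq_sum_degree) auto
  have "card (UNIV::'a set) > 0" using fin by (simp add: card_gt_0_iff)
  then have "degree (P + 1) = card (UNIV::'a set)"
    using d by (subst degree_add_eq_left) auto
  then have "degree (P + 1) > 0" using \<open>card (UNIV::'a set) > 0\<close> by simp
  then obtain x where x: "poly (P + 1) x = 0" using assms unfolding alg_closed_def by blast
  have "poly P x = 0"
    unfolding P_def poly_prod using fin by (intro prod_zero) (auto intro: bexI[of _ x])
  with x show False by simp
qed

lemma PW:
  assumes "infinite (UNIV::'a::field set)" "\<forall>x::'a. x \<noteq> 0 \<longrightarrow> x ^ e = x ^ f"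
  shows "e = f"
proof (rule ccontr)
  assume ne: "e \<noteq> f"
  define q where "q = monom (1::'a) e - monom 1 f"
  have "coeff q e = 1" using ne by (simp add: q_def coeff_monom)
  then have q0: "q \<noteq> 0" by auto
  have "UNIV \<subseteq> insert 0 {x. poly q x = 0}" using assms(2) by (auto simp: q_def poly_monom)
  then have "finite (UNIV::'a set)" using poly_roots_finite[OF q0] by (meson finite_insert finite_subset)
  with assms(1) show False by simp
qed

lemma SW:
  assumes "j0 \<noteq> 1"
  shows "(\<Sum>j\<in>ks m. ((if j = 1 then A else 0) + (if j = j0 then 1 else 0)) * lk m j) = A * lk m 1 + lk (m::nat\<Rightarrow>\<^sub>0nat) j0"
proof -
  have e: "((if j = 1 then A else 0) + (if j = j0 then 1 else 0)) * lk m j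
      = (if j = 1 then A * lk m j else 0) + (if j = j0 then lk m j else 0)" for j
    using assms by auto
  have "(\<Sum>j\<in>ks m. ((if j = 1 then A else 0) + (if j = j0 then 1 else 0)) * lk m j)
      = (\<Sum>j\<in>ks m. (if j = 1 then A * lk m j else 0)) + (\<Sum>j\<in>ks m. (if j = j0 then lk m j else 0))"
    unfolding e by (rule sum.distrib)
  also have "\<dots> = (if 1 \<in> ks m then A * lk m 1 else 0) + (if j0 \<in> ks m then lk m j0 else 0)"
    by (simp only: sum.delta finite_keys)
  also have "\<dots> = A * lk m 1 + lk m j0"
    by (simp add: in_keys_iff)
  finally show ?thesis .
qed



lemma cancel_diag:
  assumes "\<forall>i\<in>{1..n}. c i \<noteq> (0::'a::field)" "comp_end X (diag n c) = comp_end Y (diag n c)"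
  shows "X = Y"
proof
  fix i
  have d: "dg n c i \<noteq> 0" using assms(1) by (simp add: dg_def)
  have e: "sng 0 (dg n c i) * X i = sng 0 (dg n c i) * Y i" using fun_cong[OF assms(2), of i] by (simp add: C1)
  show "X i = Y i"
  proof (rule poly_mapping_eqI)
    fix m
    have "dg n c i * lk (X i) m = dg n c i * lk (Y i) m"
      using arg_cong[OF e, of "\<lambda>q. lk q m"] by (simp add: lookup_scal)
    then show "lk (X i) m = lk (Y i) m" using d by simp
  qed
qed

lemma inv_cancel: "(c::'a::field) \<noteq> 0 \<Longrightarrow> x * inverse c = inverse c * y \<Longrightarrow> x = y"
  by (metis mult.commute mult_left_cancel inverse_nonzero_iff_nonzero)

lemma prod_one_idx:
  assumes "1 \<notin> ks idx" "\<And>j. j \<noteq> 1 \<Longrightarrow> c j = 1"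
  shows "(\<Prod>j\<in>ks idx. dg n c j ^ lk idx j) = (1::'a::comm_ring_1)"
proof (rule prod.neutral, rule ballI)
  fix j assume j: "j \<in> ks idx"
  then have "j \<noteq> 1" using assms(1) by auto
  then show "dg n c j ^ lk idx j = 1" using assms(2) by (simp add: dg_def)
qed

theorem mainTheorem3:
  fixes \<Phi> :: "(nat \<Rightarrow> 'a::field mpoly) \<Rightarrow> (nat \<Rightarrow> 'a mpoly)"
    and n p :: nat
  assumes "alg_closed TYPE('a)"
    and "prime p" and "CHAR('a) = p" and "p \<noteq> 2"
    and "n \<ge> 4"
    and "\<Phi> \<in> iso (Aut0 n) (Aut0 n)"
    and "\<forall>t \<in> torus n. \<Phi> t = t"
    and "Poly_Mapping.keys idx \<subseteq> {2..n}" and "(\<Sum>i\<in>Poly_Mapping.keys idx. Poly_Mapping.lookup idx i) \<ge> 2"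
  shows "\<exists>a::'a. a \<noteq> 0 \<and> (\<forall>\<beta>. \<beta> \<noteq> 0 \<longrightarrow> \<Phi> (elem_aut idx \<beta>) = elem_aut idx (a * \<beta>))"
proof -
  have hom: "\<Phi> \<in> hom (Aut0 n) (Aut0 n)" and inj: "inj_on \<Phi> (carrier (Aut0 n))"
    using assms(6) by (auto simp: iso_def bij_betw_def)
  have HC: "\<Phi> x \<in> carrier (Aut0 n)" if "x \<in> carrier (Aut0 n)" for x
    using hom that by (auto simp: hom_def)
  have HM: "\<Phi> (comp_end x y) = comp_end (\<Phi> x) (\<Phi> y)"
    if "x \<in> carrier (Aut0 n)" "y \<in> carrier (Aut0 n)" for x y
    using hom that by (auto simp: hom_def Aut0_def)
  have n1: "n \<ge> 1" using assms(5) by simp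
  have idx1: "1 \<notin> ks idx" using assms(8) by auto
  have idx0: "idx \<noteq> 0" using assms(9) by (auto)
  have EC: "elem_aut idx \<beta> \<in> carrier (Aut0 n)" for \<beta> :: 'a
    using elem_in[OF n1 assms(8) idx0] .
  have FT: "\<Phi> (diag n c) = diag n c" if "\<forall>i\<in>{1..n}. c i \<noteq> 0" for c :: "nat \<Rightarrow> 'a"
    using assms(7) diag_torus[OF that] by blast
  have K: "comp_end (diag n c) (\<Phi> (elem_aut idx \<beta>)) = comp_end (\<Phi> (elem_aut idx \<gamma>)) (diag n c)"
    if c: "\<forall>i\<in>{1..n}. c i \<noteq> 0" and e: "dg n c 1 * \<gamma> = \<beta> * (\<Prod>j\<in>ks idx. dg n c j ^ lk idx j)"
    for c :: "nat \<Rightarrow> 'a" and \<beta> \<gamma>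
  proof -
    have "\<Phi> (comp_end (diag n c) (elem_aut idx \<beta>)) = \<Phi> (comp_end (elem_aut idx \<gamma>) (diag n c))"
      using C3[OF e] by simp
    then show ?thesis using HM[OF diag_in[OF c] EC] HM[OF EC diag_in[OF c]] FT[OF c] by simp
  qed
  define \<psi> where "\<psi> = \<Phi> (elem_aut idx 1)"
  have psiC: "\<psi> \<in> carrier (Aut0 n)" unfolding \<psi>_def by (rule HC[OF EC])
  then have psiE: "\<psi> \<in> End0 n" and "\<exists>\<tau>\<in>End0 n. comp_end \<psi> \<tau> = Var \<and> comp_end \<tau> \<psi> = Var"
    by (auto simp: Aut0_def Aut0_set_def)
  then obtain \<tau> where tau: "comp_end \<psi> \<tau> = Var" "comp_end \<tau> \<psi> = Var" by blast
  have KB: "ks m \<subseteq> {1..n}" if "i \<in> {1..n}" "m \<in> ks (\<psi> i)" for i m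
    using psiE that by (auto simp: End0_def in_vars_def)
  have psiout: "\<psi> i = Var i" if "i \<notin> {1..n}" for i
    using psiE that by (auto simp: End0_def)
  have inf: "infinite (UNIV::'a set)" using assms(1) by (rule alg_closed_infinite)
  have S1: "lk idx j0 * lk m 1 + lk m j0 = (if i = 1 then lk idx j0 else 0) + (if i = j0 then 1 else 0)"
    if i: "i \<in> {1..n}" and m: "m \<in> ks (\<psi> i)" and j0: "j0 \<in> {2..n}" for i m j0
  proof -
    define w where "w j = (if j = 1 then lk idx j0 else 0) + (if j = j0 then 1 else 0)" for j
    have "x ^ (lk idx j0 * lk m 1 + lk m j0) = x ^ w i" if x: "x \<noteq> 0" for x :: 'a
    proof -
      define c where "c j = x ^ w j" for j
      have cnz: "\<forall>i\<in>{1..n}. c i \<noteq> 0" using x by (simp add: c_def)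
      have dgc: "dg n c j = x ^ w j" for j using j0 n1 by (auto simp: dg_def c_def w_def)
      have prodx: "(\<Prod>j\<in>ks q. dg n c j ^ lk q j) = x ^ (lk idx j0 * lk q 1 + lk q j0)" for q
      proof -
        have "(\<Prod>j\<in>ks q. dg n c j ^ lk q j) = x ^ (\<Sum>j\<in>ks q. w j * lk q j)"
          unfolding dgc power_mult[symmetric] power_sum by simp
        also have "(\<Sum>j\<in>ks q. w j * lk q j) = lk idx j0 * lk q 1 + lk q j0"
          unfolding w_def by (rule SW) (use j0 in auto)
        finally show ?thesis .
      qed
      have "lk idx 1 = 0" using idx1 by (simp add: in_keys_iff)
      then have "dg n c 1 * 1 = 1 * (\<Prod>j\<in>ks idx. dg n c j ^ lk idx j)"
        using prodx[of idx] dgc[of 1] j0 by (simp add: w_def)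
      from K[OF cnz this] have comm: "comp_end (diag n c) \<psi> = comp_end \<psi> (diag n c)"
        by (simp add: \<psi>_def)
      have "lk (comp_end (diag n c) \<psi> i) m = lk (comp_end \<psi> (diag n c) i) m" using comm by simp
      then have "lk (\<psi> i) m * x ^ (lk idx j0 * lk m 1 + lk m j0) = dg n c i * lk (\<psi> i) m"
        by (simp only: C2 C1 lookup_scal prodx)
      then have "lk (\<psi> i) m * x ^ (lk idx j0 * lk m 1 + lk m j0) = x ^ w i * lk (\<psi> i) m"
        by (simp only: dgc)
      moreover have "lk (\<psi> i) m \<noteq> 0" using m by (simp add: in_keys_iff)
      ultimately show ?thesis by (simp add: mult.commute)
    qed
    then have "lk idx j0 * lk m 1 + lk m j0 = w i" using PW[OF inf] by blast
    then show ?thesis by (simp add: w_def)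
  qed
  define I where "I = (\<Sum>j\<in>{2..n}. lk idx j)"
  have I2: "I \<ge> 2"
  proof -
    have "(\<Sum>j\<in>{2..n}. lk idx j) = (\<Sum>j\<in>ks idx. lk idx j)"
      by (rule sum.mono_neutral_right) (use assms(8) in \<open>auto simp: in_keys_iff\<close>)
    then show ?thesis using assms(9) by (simp add: I_def)
  qed
  have shape_k: "\<psi> k = sng (sng k 1) (lk (\<psi> k) (sng k 1))" if k: "k \<in> {2..n}" for k
  proof -
    have k1: "k \<in> {1..n}" "k \<noteq> 1" using k by auto
    have mk: "m = sng k 1" if m: "m \<in> ks (\<psi> k)" for m
    proof -
      have eq: "lk idx j0 * lk m 1 + lk m j0 = (if k = j0 then 1 else 0)" if "j0 \<in> {2..n}" for j0
        using S1[OF k1(1) m that] k1 by simp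
      have "(\<Sum>j0\<in>{2..n}. lk idx j0 * lk m 1 + lk m j0) = (\<Sum>j0\<in>{2..n}. if k = j0 then 1 else 0)"
        by (rule sum.cong[OF refl]) (rule eq)
      also have "\<dots> = 1" using k by simp
      finally have "I * lk m 1 + (\<Sum>j0\<in>{2..n}. lk m j0) = 1"
        by (simp add: I_def sum.distrib sum_distrib_right)
      then have le: "I * lk m 1 \<le> 1" by linarith
      have m1: "lk m 1 = 0"
      proof (rule ccontr)
        assume "lk m 1 \<noteq> 0"
        then have "I \<le> I * lk m 1" by simp
        with le I2 show False by linarith
      qed
      show ?thesis
      proof (rule poly_mapping_eqI)
        fix j
        show "lk m j = lk (sng k 1) j"
        proof (cases "j \<in> {2..n}")
          case True then show ?thesis using eq[OF True] m1 by (simp add: lookup_single when_def)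
        next
          case False
          show ?thesis
          proof (cases "j = 1")
            case True then show ?thesis using m1 k1 by (simp add: lookup_single when_def)
          next
            case False
            with \<open>j \<notin> {2..n}\<close> have "j \<notin> {1..n}" by auto
            then have "j \<notin> ks m" using KB[OF k1(1) m] by blast
            then show ?thesis using k \<open>j \<notin> {1..n}\<close> by (auto simp: lookup_single when_def in_keys_iff)
          qed
        qed
      qed
    qed
    show ?thesis
    proof (rule poly_mapping_eqI)
      fix m
      show "lk (\<psi> k) m = lk (sng (sng k 1) (lk (\<psi> k) (sng k 1))) m"
        using mk[of m] by (cases "m \<in> ks (\<psi> k)") (auto simp: lookup_single when_def in_keys_iff)
    qed
  qed
  define a where "a = lk (\<psi> 1) (sng 1 1)"
  define b where "b = lk (\<psi> 1) idx"
  define A where "A k = lk (\<psi> k) (sng k 1)" for k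
  have sk: "\<psi> k = sng (sng k 1) (A k)" if "k \<in> {2..n}" for k
    using shape_k[OF that] by (simp add: A_def)
  have lkidx1: "lk idx 1 = 0" using idx1 by (simp add: in_keys_iff)
  have e1idx: "sng 1 1 \<noteq> idx"
  proof
    assume "sng 1 1 = idx"
    then have "lk (sng (1::nat) (1::nat)) 1 = lk idx 1" by simp
    then show False using lkidx1 by simp
  qed
  have m1cases: "m = sng 1 1 \<or> m = idx" if m: "m \<in> ks (\<psi> 1)" for m
  proof -
    have i1: "(1::nat) \<in> {1..n}" using n1 by simp
    have eq: "lk idx j0 * lk m 1 + lk m j0 = lk idx j0" if "j0 \<in> {2..n}" for j0
      using S1[OF i1 m that] that by auto
    have KBm: "j \<notin> ks m" if "j \<notin> {1..n}" for j using KB[OF i1 m] that by blast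
    obtain j1 where j1: "j1 \<in> ks idx" using idx0 by (metis all_not_in_conv keys_eq_empty)
    have j1n: "j1 \<in> {2..n}" using j1 assms(8) by blast
    have j1p: "lk idx j1 > 0" using j1 by (simp add: in_keys_iff)
    have le1: "lk m 1 \<le> 1"
    proof (rule ccontr)
      assume "\<not> lk m 1 \<le> 1"
      then have "lk idx j1 * 2 \<le> lk idx j1 * lk m 1" by (intro mult_le_mono2) simp
      with eq[OF j1n] j1p show False by linarith
    qed
    show ?thesis
    proof (cases "lk m 1 = 0")
      case True
      have "m = idx"
      proof (rule poly_mapping_eqI)
        fix j
        show "lk m j = lk idx j"
        proof (cases "j \<in> {2..n}")
          case True then show ?thesis using eq[OF True] \<open>lk m 1 = 0\<close> by simp
        next
          case False
          show ?thesis
          proof (cases "j = 1")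
            case True then show ?thesis using \<open>lk m 1 = 0\<close> lkidx1 by simp
          next
            case False
            with \<open>j \<notin> {2..n}\<close> have "j \<notin> {1..n}" "j \<notin> ks idx" using assms(8) by auto
            then show ?thesis using KBm by (simp add: in_keys_iff)
          qed
        qed
      qed
      then show ?thesis by simp
    next
      case False
      with le1 have m11: "lk m 1 = 1" by simp
      have "m = sng 1 1"
      proof (rule poly_mapping_eqI)
        fix j
        show "lk m j = lk (sng 1 1) j"
        proof (cases "j \<in> {2..n}")
          case True then show ?thesis using eq[OF True] m11 by (auto simp: lookup_single when_def)
        next
          case False
          show ?thesis
          proof (cases "j = 1")
            case True then show ?thesis using m11 by simp
          next
            case False
            with \<open>j \<notin> {2..n}\<close> have "j \<notin> {1..n}" by auto
            then show ?thesis using KBm False by (simp add: in_keys_iff lookup_single when_def)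
          qed
        qed
      qed
      then show ?thesis by simp
    qed
  qed
  have sh1: "\<psi> 1 = sng (sng 1 1) a + sng idx b"
  proof (rule poly_mapping_eqI)
    fix m
    show "lk (\<psi> 1) m = lk (sng (sng 1 1) a + sng idx b) m"
      using m1cases[of m] e1idx by (cases "m \<in> ks (\<psi> 1)") (auto simp: lookup_add lookup_single when_def in_keys_iff a_def b_def)
  qed
  have Anz: "A k \<noteq> 0" if k: "k \<in> {2..n}" for k
  proof
    assume "A k = 0"
    then have "\<psi> k = 0" using sk[OF k] by simp
    then have "comp_end \<tau> \<psi> k = 0" by (simp add: comp_end_def)
    then show False using tau(2) by (simp add: Var_def)
  qed
  have anz: "a \<noteq> 0"
  proof
    assume "a = 0"
    then have p1: "\<psi> 1 = sng idx b" using sh1 by simp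
    have "\<exists>F G. \<psi> j = sng F G \<and> lk F 1 = (0::nat)" for j
    proof (cases "j = 1")
      case True then show ?thesis using p1 lkidx1 by auto
    next
      case False
      show ?thesis
      proof (cases "j \<in> {2..n}")
        case True then show ?thesis using sk[OF True] False by (auto simp: lookup_single when_def)
      next
        case F2: False
        with False have "j \<notin> {1..n}" by auto
        then show ?thesis using psiout False by (auto simp: Var_def lookup_single when_def)
      qed
    qed
    then have "lk (subst \<psi> (\<tau> 1)) (sng 1 1) = 0" by (rule subst_F1)
    moreover have "subst \<psi> (\<tau> 1) = Var 1" using fun_cong[OF tau(1), of 1] by (simp add: comp_end_def)
    ultimately show False by (simp add: Var_def)
  qed
  have two: "(2::'a) \<noteq> 0"
  proof
    assume "(2::'a) = 0"
    then have "of_nat 2 = (0::'a)" by simp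
    then have "p dvd 2" using assms(3) by (simp only: of_nat_eq_0_iff_char_dvd)
    then have "p \<le> 2" by (rule dvd_imp_le) simp
    moreover have "p \<noteq> 0" "p \<noteq> 1" using assms(2) by (auto simp del: prime_nat_iff_prime)
    ultimately show False using assms(4) by linarith
  qed
  define c2 where "c2 j = (if j = 1 then inverse (2::'a) else 1)" for j :: nat
  have c2nz: "\<forall>i\<in>{1..n}. c2 i \<noteq> 0" using two by (simp add: c2_def)
  have dg21: "dg n c2 1 = inverse 2" "dg n c2 (Suc 0) = inverse 2" using n1 by (simp_all add: dg_def c2_def)
  have dg2k: "dg n c2 j = 1" if "j \<noteq> 1" for j using that by (simp add: dg_def c2_def)
  have pr2: "(\<Prod>j\<in>ks idx. dg n c2 j ^ lk idx j) = 1"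
    by (rule prod_one_idx[OF idx1]) (simp add: c2_def)
  have "dg n c2 1 * 2 = 1 * (\<Prod>j\<in>ks idx. dg n c2 j ^ lk idx j)"
    using two by (simp add: dg21 pr2)
  from K[OF c2nz this] have R2: "comp_end (diag n c2) \<psi> = comp_end (\<Phi> (elem_aut idx 2)) (diag n c2)"
    by (simp add: \<psi>_def)
  have "elem_aut idx 2 = comp_end (elem_aut idx 1) (elem_aut idx (1::'a))"
    using C4[OF idx1, of "1::'a" 1] by (simp add: one_add_one)
  then have "\<Phi> (elem_aut idx 2) = comp_end \<psi> \<psi>" using HM[OF EC EC] by (simp add: \<psi>_def)
  with R2 have R: "comp_end (diag n c2) \<psi> = comp_end (comp_end \<psi> \<psi>) (diag n c2)" by simp
  have A1: "A k = 1" if k: "k \<in> {2..n}" for k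
  proof -
    have k1: "k \<noteq> 1" using k by auto
    have "lk (comp_end (diag n c2) \<psi> k) (sng k 1) = lk (comp_end (comp_end \<psi> \<psi>) (diag n c2) k) (sng k 1)"
      using R by simp
    moreover have "lk (comp_end (diag n c2) \<psi> k) (sng k 1) = A k"
      by (simp add: C2 A_def dg2k[OF k1])
    moreover have "comp_end \<psi> \<psi> k = sng 0 (A k) * \<psi> k"
      by (simp add: comp_end_def sk[OF k] subst_single)
    then have "lk (comp_end (comp_end \<psi> \<psi>) (diag n c2) k) (sng k 1) = A k * A k"
      by (simp add: C1 lookup_scal dg2k[OF k1] sk[OF k])
    ultimately have "A k = A k * A k" by simp
    then show ?thesis using Anz[OF k] by simp
  qed
  have monidx: "lk (monm \<psi> idx) (sng 1 1) = 0"
  proof (rule mon_F1)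
    fix j assume j: "j \<in> ks idx"
    then have "j \<in> {2..n}" using assms(8) by blast
    then show "\<exists>F G. \<psi> j = sng F G \<and> lk F 1 = 0" using sk by (auto simp: lookup_single when_def)
  qed
  have a1: "a = 1"
  proof -
    have "lk (comp_end (diag n c2) \<psi> 1) (sng 1 1) = lk (comp_end (comp_end \<psi> \<psi>) (diag n c2) 1) (sng 1 1)"
      using R by simp
    moreover have "lk (comp_end (diag n c2) \<psi> 1) (sng 1 1) = a * inverse 2"
      by (simp add: C2 a_def dg21)
    moreover have "comp_end \<psi> \<psi> 1 = sng 0 a * \<psi> 1 + sng 0 b * monm \<psi> idx"
    proof -
      have "comp_end \<psi> \<psi> 1 = subst \<psi> (\<psi> 1)" by (simp add: comp_end_def)
      also have "\<dots> = subst \<psi> (sng (sng 1 1) a + sng idx b)" by (simp only: sh1)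
      also have "\<dots> = sng 0 a * monm \<psi> (sng 1 1) + sng 0 b * monm \<psi> idx" by (simp only: subst_add subst_single)
      also have "monm \<psi> (sng 1 1) = \<psi> 1" by (rule mon_e)
      finally show ?thesis .
    qed
    then have "lk (comp_end (comp_end \<psi> \<psi>) (diag n c2) 1) (sng 1 1) = inverse 2 * (a * a)"
      by (simp add: C1 lookup_scal dg21 lookup_add monidx monidx[simplified] a_def)
    ultimately have "a * inverse 2 = inverse 2 * (a * a)" by metis
    then have "a = a * a" by (rule inv_cancel[OF two])
    then show ?thesis using anz by simp
  qed
  have psiE: "\<psi> = elem_aut idx b"
  proof
    fix i
    show "\<psi> i = elem_aut idx b i"
    proof (cases "i = 1")
      case True then show ?thesis using sh1 a1 by (simp add: Var_def)
    next
      case False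
      show ?thesis
      proof (cases "i \<in> {2..n}")
        case True then show ?thesis using sk A1 False by (simp add: Var_def)
      next
        case F2: False
        with False have "i \<notin> {1..n}" by auto
        then show ?thesis using psiout False by simp
      qed
    qed
  qed
  have PV: "\<Phi> Var = Var" using assms(7) Var_torus by blast
  have bnz: "b \<noteq> 0"
  proof
    assume "b = 0"
    then have "\<Phi> (elem_aut idx 1) = \<Phi> (elem_aut idx 0)"
      using psiE PV by (simp add: \<psi>_def elem_zero)
    then have "elem_aut idx 1 = elem_aut idx (0::'a)" using inj EC by (meson inj_on_def)
    then have "elem_aut idx 1 1 = elem_aut idx (0::'a) 1" by simp
    then show False by simp
  qed
  show ?thesis
  proof (intro exI[of _ b] conjI allI impI)
    show "b \<noteq> 0" by (rule bnz)
    fix \<beta> :: 'a assume \<beta>: "\<beta> \<noteq> 0"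
    define c where "c j = (if j = 1 then inverse \<beta> else 1)" for j :: nat
    have cnz: "\<forall>i\<in>{1..n}. c i \<noteq> 0" using \<beta> by (simp add: c_def)
    have dg1: "dg n c 1 = inverse \<beta>" "dg n c (Suc 0) = inverse \<beta>" using n1 by (simp_all add: dg_def c_def)
    have pr: "(\<Prod>j\<in>ks idx. dg n c j ^ lk idx j) = 1"
      by (rule prod_one_idx[OF idx1]) (simp add: c_def)
    have "dg n c 1 * \<beta> = 1 * (\<Prod>j\<in>ks idx. dg n c j ^ lk idx j)"
      using \<beta> by (simp add: dg1 pr)
    from K[OF cnz this] have R1: "comp_end (diag n c) \<psi> = comp_end (\<Phi> (elem_aut idx \<beta>)) (diag n c)"
      by (simp add: \<psi>_def)
    have "dg n c 1 * (b * \<beta>) = b * (\<Prod>j\<in>ks idx. dg n c j ^ lk idx j)"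
      using \<beta> by (simp add: dg1 pr)
    from C3[OF this] have R3: "comp_end (diag n c) (elem_aut idx b) = comp_end (elem_aut idx (b * \<beta>)) (diag n c)" .
    have "comp_end (\<Phi> (elem_aut idx \<beta>)) (diag n c) = comp_end (elem_aut idx (b * \<beta>)) (diag n c)"
      using R1 R3 psiE by simp
    then show "\<Phi> (elem_aut idx \<beta>) = elem_aut idx (b * \<beta>)" by (rule cancel_diag[OF cnz])
  qed
qed


end
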